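(* Let $k>0$ and let $U:(0,1)\to(0,\infty)$ be any function with $U(c)\ge\sigma(c)$ for all $c\in(0,1)$. Then for all $c\in(0,1)$, $$\frac{2k}{U(1-c)}\le L_2(c)\le\sigma(c).$$ In particular, with $U=U_1$, where $U_1(c)=-2\Phi^{-1}\!\left(\frac{1-c}{1+e^k}\right)$, this gives $-k\big/\Phi^{-1}\!\left(\frac{c}{1+e^k}\right)\le L_2(c)$.
   Context: Let $\Phi$ denote the standard normal distribution function. For $\sigma>0$ put $d_1(\sigma)=-k/\sigma+\sigma/2$, $d_2(\sigma)=-k/\sigma-\sigma/2$, and $C_{\mathrm{BS}}(\sigma)=\Phi(d_1(\sigma))-e^k\,\Phi(d_2(\sigma))$, a strictly increasing bijection from $(0,\infty)$ onto $(0,1)$; for $c\in(0,1)$ the implied volatility $\sigma(c)$ is the unique $\sigma>0$ with $C_{\mathrm{BS}}(\sigma)=c$. The function $d_1^{-1}(x)=x+\sqrt{x^2+2k}$ is the inverse of $d_1$, and $L_2(c)=d_1^{-1}(\Phi^{-1}(c))$. The function $U_1$ is known to satisfy $U_1(c)\ge\sigma(c)$. *)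

theory Defs
  imports "HOL-Probability.Probability"
begin

definition Phi :: "real \<Rightarrow> real" where
  "Phi x = (LBINT t:{..x}. std_normal_density t)"

definition Phi_inv :: "real \<Rightarrow> real" where
  "Phi_inv p = (THE x. Phi x = p)"

definition d1 :: "real \<Rightarrow> real \<Rightarrow> real" where
  "d1 k s = - k / s + s / 2"

definition d2 :: "real \<Rightarrow> real \<Rightarrow> real" where
  "d2 k s = - k / s - s / 2"

definition C_BS :: "real \<Rightarrow> real \<Rightarrow> real" where
  "C_BS k s = Phi (d1 k s) - exp k * Phi (d2 k s)"

definition impl_vol :: "real \<Rightarrow> real \<Rightarrow> real" where
  "impl_vol k c = (THE s. s > 0 \<and> C_BS k s = c)"

definition d1_inv :: "real \<Rightarrow> real \<Rightarrow> real" where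
  "d1_inv k x = x + sqrt (x^2 + 2 * k)"

definition L2 :: "real \<Rightarrow> real \<Rightarrow> real" where
  "L2 k c = d1_inv k (Phi_inv c)"

definition U1 :: "real \<Rightarrow> real \<Rightarrow> real" where
  "U1 k c = - 2 * Phi_inv ((1 - c) / (1 + exp k))"

end

theory Submission
  imports Defs "HOL-Real_Asymp.Real_Asymp"
begin


lemma phi_pos: "std_normal_density x > 0"
  by (simp add: normal_density_pos)

lemma phi_cont: "continuous_on A std_normal_density"
  unfolding std_normal_density_def by (intro continuous_intros) auto

lemma phi_setint: "A \<in> sets borel \<Longrightarrow> set_integrable lborel A std_normal_density"
  unfolding set_integrable_def by (intro integrable_mult_indicator) auto

lemma Phi_split:
  assumes "a \<le> y"
  shows "Phi y = (LBINT t:{..<a}. std_normal_density t) + integral {a..y} std_normal_density"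
proof -
  have "{..y} = {..<a} \<union> {a..y}" using assms by auto
  then have "Phi y = (LBINT t:{..<a}. std_normal_density t) + (LBINT t:{a..y}. std_normal_density t)"
    unfolding Phi_def by (simp add: set_integral_Un phi_setint ivl_disj_int)
  also have "(LBINT t:{a..y}. std_normal_density t) = integral {a..y} std_normal_density"
    by (rule set_borel_integral_eq_integral(2)) (simp add: phi_setint)
  finally show ?thesis .
qed

lemma Phi_deriv: "(Phi has_real_derivative std_normal_density x) (at x)"
proof -
  let ?C = "LBINT t:{..<x-1}. std_normal_density t"
  have "((\<lambda>u. integral {x-1..u} std_normal_density) has_vector_derivative std_normal_density x) (at x within {x-1..x+1})"
    by (rule integral_has_vector_derivative) (auto simp: phi_cont)
  then have "((\<lambda>u. integral {x-1..u} std_normal_density) has_real_derivative std_normal_density x) (at x)"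
    by (simp add: has_real_derivative_iff_has_vector_derivative at_within_Icc_at)
  then have "((\<lambda>u. ?C + integral {x-1..u} std_normal_density) has_real_derivative std_normal_density x) (at x)"
    by (auto intro!: derivative_eq_intros)
  then show ?thesis
    by (rule has_field_derivative_transform_within_open[where S="{x-1<..}"])
       (auto intro!: Phi_split[symmetric])
qed

lemma Phi_cont: "isCont Phi x"
  using Phi_deriv DERIV_isCont by blast

lemma Phi_contOn: "continuous_on A Phi"
  by (simp add: Phi_cont continuous_at_imp_continuous_on)

lemma Phi_strict_mono: "x < y \<Longrightarrow> Phi x < Phi y"
  by (rule DERIV_pos_imp_increasing) (use Phi_deriv phi_pos in blast)+

lemma Phi_mono: "x \<le> y \<Longrightarrow> Phi x \<le> Phi y"
  using Phi_strict_mono by (cases "x = y") (auto simp: less_imp_le)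

lemma Phi_at_top: "(Phi \<longlongrightarrow> 1) at_top"
proof (rule tendsto_at_topI_sequentially)
  fix X :: "nat \<Rightarrow> real" assume X: "filterlim X at_top sequentially"
  have "(\<lambda>n. Phi (X n)) \<longlonglongrightarrow> integral\<^sup>L lborel (\<lambda>x. std_normal_density x)"
    unfolding Phi_def set_lebesgue_integral_def
  proof (rule integral_dominated_convergence[where w=std_normal_density])
    show "AE x in lborel. (\<lambda>n. indicat_real {..X n} x *\<^sub>R std_normal_density x) \<longlonglongrightarrow> std_normal_density x"
    proof
      fix x
      from X have "eventually (\<lambda>n. x \<le> X n) sequentially"
        unfolding filterlim_at_top_ge[where c=x] by auto
      then show "(\<lambda>n. indicat_real {..X n} x *\<^sub>R std_normal_density x) \<longlonglongrightarrow> std_normal_density x"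
        by (intro tendsto_eventually) (auto split: split_indicator elim!: eventually_mono)
    qed
  qed (auto split: split_indicator)
  then show "(\<lambda>n. Phi (X n)) \<longlonglongrightarrow> 1" by simp
qed

lemma Phi_at_bot: "(Phi \<longlongrightarrow> 0) at_bot"
proof (rule tendsto_at_botI_sequentially)
  fix X :: "nat \<Rightarrow> real" assume X: "filterlim X at_bot sequentially"
  have "(\<lambda>n. Phi (X n)) \<longlonglongrightarrow> integral\<^sup>L lborel (\<lambda>x. indicat_real {} x *\<^sub>R std_normal_density x)"
    unfolding Phi_def set_lebesgue_integral_def
  proof (rule integral_dominated_convergence[where w=std_normal_density])
    show "AE x in lborel. (\<lambda>n. indicat_real {..X n} x *\<^sub>R std_normal_density x) \<longlonglongrightarrow> indicat_real {} x *\<^sub>R std_normal_density x"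
    proof
      fix x
      from X have "eventually (\<lambda>n. X n \<le> x - 1) sequentially"
        unfolding filterlim_at_bot_le[where c=x] by auto
      then have "eventually (\<lambda>n. X n < x) sequentially"
        by (rule eventually_mono) auto
      then show "(\<lambda>n. indicat_real {..X n} x *\<^sub>R std_normal_density x) \<longlonglongrightarrow> indicat_real {} x *\<^sub>R std_normal_density x"
        by (intro tendsto_eventually) (auto split: split_indicator elim!: eventually_mono)
    qed
  qed (auto split: split_indicator)
  then show "(\<lambda>n. Phi (X n)) \<longlonglongrightarrow> 0" by simp
qed

lemma Phi_pos: "Phi x > 0"
  by (rule DERIV_pos_imp_increasing_at_bot[OF _ Phi_at_bot]) (use Phi_deriv phi_pos in blast)

lemma Phi_le1: "Phi x \<le> 1"
proof (rule tendsto_le[OF _ Phi_at_top tendsto_const])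
  show "\<forall>\<^sub>F y in at_top. Phi x \<le> Phi y"
    by (simp add: eventually_at_top_linorder) (use Phi_mono in blast)
qed simp

lemma Phi_less1: "Phi x < 1"
  using Phi_strict_mono[of x "x+1"] Phi_le1[of "x+1"] by linarith

lemma Phi_surj:
  assumes "0 < p" "p < 1"
  shows "\<exists>x. Phi x = p"
proof -
  have "\<forall>\<^sub>F x in at_bot. Phi x < p" using Phi_at_bot assms(1) by (rule order_tendstoD)
  then obtain a where a: "Phi a < p" by (auto simp: eventually_at_bot_linorder)
  have "\<forall>\<^sub>F x in at_top. Phi x > p" using Phi_at_top assms(2) by (rule order_tendstoD)
  then obtain b where b: "Phi b > p" by (auto simp: eventually_at_top_linorder)
  have "a \<le> b" using a b Phi_mono by (meson le_less_trans less_le_not_le nle_le)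
  then show ?thesis using IVT'[of Phi a p b] a b Phi_contOn by force
qed

lemma Phi_inj: "Phi x = Phi y \<Longrightarrow> x = y"
  using Phi_strict_mono by (metis less_irrefl neq_iff)

lemma Phi_Phi_inv: "0 < p \<Longrightarrow> p < 1 \<Longrightarrow> Phi (Phi_inv p) = p"
  unfolding Phi_inv_def using Phi_surj Phi_inj by (metis (mono_tags, lifting) theI)

lemma Phi_inv_Phi: "Phi_inv (Phi x) = x"
  unfolding Phi_inv_def using Phi_inj by blast

lemma Phi_inv_le: "0 < p \<Longrightarrow> p < 1 \<Longrightarrow> p \<le> Phi y \<Longrightarrow> Phi_inv p \<le> y"
  using Phi_Phi_inv Phi_strict_mono by (metis not_le)

lemma Phi_inv_less: "0 < p \<Longrightarrow> p < 1 \<Longrightarrow> p < Phi y \<Longrightarrow> Phi_inv p < y"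
  using Phi_Phi_inv Phi_mono by (metis not_le)

lemma Phi_sym: "Phi (-x) = 1 - Phi x"
proof -
  let ?f = "\<lambda>x. Phi (-x) + Phi x"
  have d: "\<And>x. (?f has_real_derivative 0) (at x)"
  proof -
    fix x
    have "(?f has_real_derivative (std_normal_density (-x) * (-1) + std_normal_density x)) (at x)"
      by (intro derivative_intros DERIV_chain2[OF Phi_deriv] Phi_deriv)
    then show "(?f has_real_derivative 0) (at x)" by (simp add: std_normal_density_def)
  qed
  have c: "\<And>y. ?f y = ?f x" using DERIV_isconst_all d by blast
  have "(?f \<longlongrightarrow> 0 + 1) at_top"
    by (intro tendsto_intros filterlim_compose[OF Phi_at_bot filterlim_uminus_at_bot_at_top] Phi_at_top)
  moreover have "?f = (\<lambda>_. ?f x)" using c by blast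
  then have "(?f \<longlongrightarrow> ?f x) at_top" by (metis tendsto_const)
  ultimately have "?f x = 0 + 1" using tendsto_unique[OF trivial_limit_at_top_linorder] by blast
  then show ?thesis by simp
qed

lemma Phi_inv_sym: "0 < p \<Longrightarrow> p < 1 \<Longrightarrow> Phi_inv (1 - p) = - Phi_inv p"
  by (metis Phi_Phi_inv Phi_inv_Phi Phi_sym)

lemma Phi_0: "Phi 0 = 1/2"
  using Phi_sym[of 0] by simp



lemma phi_ident: "exp k * std_normal_density (- k / s - s / 2) = std_normal_density (- k / s + s / 2)"
  if "s \<noteq> 0" for k s :: real
proof -
  have "k + (- (- k / s - s / 2)\<^sup>2 / 2) = - (- k / s + s / 2)\<^sup>2 / 2"
    using that by (simp add: power2_eq_square field_simps)
  then show ?thesis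
    unfolding std_normal_density_def by (simp add: exp_add[symmetric] mult.left_commute)
qed

lemma C_deriv:
  assumes "s > 0"
  shows "(C_BS k has_real_derivative std_normal_density (d1 k s)) (at s)"
proof -
  have "((\<lambda>s. Phi (- k / s + s / 2) - exp k * Phi (- k / s - s / 2)) has_real_derivative
      std_normal_density (- k / s + s / 2) * (k / s\<^sup>2 + 1/2)
      - exp k * (std_normal_density (- k / s - s / 2) * (k / s\<^sup>2 - 1/2))) (at s)"
    using assms
    by (auto intro!: derivative_eq_intros DERIV_chain2[OF Phi_deriv] simp: power2_eq_square field_simps)
  also have "std_normal_density (- k / s + s / 2) * (k / s\<^sup>2 + 1/2)
      - exp k * (std_normal_density (- k / s - s / 2) * (k / s\<^sup>2 - 1/2)) = std_normal_density (- k / s + s / 2)"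
    using phi_ident[of s k] assms by (simp add: algebra_simps)
  finally show ?thesis unfolding C_BS_def d1_def d2_def by (simp add: fun_eq_iff)
qed

lemma C_strict_mono: "0 < a \<Longrightarrow> a < b \<Longrightarrow> C_BS k a < C_BS k b"
proof (rule DERIV_pos_imp_increasing[of a b "C_BS k"])
  fix x assume "0 < a" "a \<le> x"
  then show "\<exists>y. (C_BS k has_real_derivative y) (at x) \<and> 0 < y"
    using C_deriv[of x k] phi_pos by auto
qed

lemma C_at_0: "k > 0 \<Longrightarrow> (C_BS k \<longlongrightarrow> 0) (at_right 0)"
proof -
  assume k: "k > 0"
  have 1: "filterlim (\<lambda>s::real. - k / s + s / 2) at_bot (at_right 0)" using k by real_asymp
  have 2: "filterlim (\<lambda>s::real. - k / s - s / 2) at_bot (at_right 0)" using k by real_asymp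
  have "((\<lambda>s. Phi (- k / s + s / 2) - exp k * Phi (- k / s - s / 2)) \<longlongrightarrow> 0 - exp k * 0) (at_right 0)"
    by (intro tendsto_intros filterlim_compose[OF Phi_at_bot 1] filterlim_compose[OF Phi_at_bot 2])
  then show ?thesis unfolding C_BS_def d1_def d2_def by simp
qed

lemma C_at_top: "k > 0 \<Longrightarrow> (C_BS k \<longlongrightarrow> 1) at_top"
proof -
  assume k: "k > 0"
  have 1: "filterlim (\<lambda>s::real. - k / s + s / 2) at_top at_top" using k by real_asymp
  have 2: "filterlim (\<lambda>s::real. - k / s - s / 2) at_bot at_top" using k by real_asymp
  have "((\<lambda>s. Phi (- k / s + s / 2) - exp k * Phi (- k / s - s / 2)) \<longlongrightarrow> 1 - exp k * 0) at_top"
    by (intro tendsto_intros filterlim_compose[OF Phi_at_top 1] filterlim_compose[OF Phi_at_bot 2])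
  then show ?thesis unfolding C_BS_def d1_def d2_def by simp
qed

lemma impl_vol:
  assumes k: "k > 0" and c: "0 < c" "c < 1"
  shows "impl_vol k c > 0 \<and> C_BS k (impl_vol k c) = c"
proof -
  have "\<forall>\<^sub>F s in at_right 0. C_BS k s < c" using C_at_0[OF k] c(1) by (rule order_tendstoD)
  then obtain d where d: "d > 0" "\<And>s. 0 < s \<Longrightarrow> s < d \<Longrightarrow> C_BS k s < c"
    by (auto simp: eventually_at_right_field)
  define a where "a = d / 2"
  have a: "a > 0" "C_BS k a < c" using d unfolding a_def by auto
  have "\<forall>\<^sub>F s in at_top. C_BS k s > c" using C_at_top[OF k] c(2) by (rule order_tendstoD)
  then obtain N where N: "\<And>n. n \<ge> N \<Longrightarrow> c < C_BS k n" by (auto simp: eventually_at_top_linorder)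
  define b where "b = max N (a + 1)"
  have b: "b > a" "C_BS k b > c" using N[of b] unfolding b_def by auto
  have cont: "continuous_on {a..b} (C_BS k)"
    using a(1) by (intro continuous_at_imp_continuous_on ballI DERIV_isCont[OF C_deriv]) auto
  have "\<exists>x\<ge>a. x \<le> b \<and> C_BS k x = c"
    by (rule IVT'[OF less_imp_le[OF a(2)] less_imp_le[OF b(2)] less_imp_le[OF b(1)] cont])
  then obtain s where s: "a \<le> s" "s \<le> b" "C_BS k s = c" by blast
  have "impl_vol k c = s"
    unfolding impl_vol_def
  proof (rule the_equality)
    show "0 < s \<and> C_BS k s = c" using s a by auto
    fix t assume t: "0 < t \<and> C_BS k t = c"
    have s0: "0 < s" using s a by linarith
    show "t = s"
    proof (rule ccontr)
      assume "t \<noteq> s"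
      then have "t < s \<or> s < t" by linarith
      then have "C_BS k t < C_BS k s \<or> C_BS k s < C_BS k t"
        using C_strict_mono[of t s k] C_strict_mono[of s t k] t s0 by blast
      then show False using t s(3) by linarith
    qed
  qed
  then show ?thesis using s a by auto
qed

lemma d1_inv_le:
  assumes k: "k > 0" and s: "s > 0" and x: "x \<le> d1 k s"
  shows "d1_inv k x \<le> s"
proof -
  have xs: "x \<le> s / 2 - k / s" using x by (simp add: d1_def)
  then have "2 * k \<le> s\<^sup>2 - 2 * s * x"
    using s by (simp add: field_simps power2_eq_square)
  then have "x\<^sup>2 + 2 * k \<le> (s - x)\<^sup>2" by (simp add: power2_eq_square algebra_simps)
  moreover have "s - x \<ge> 0"
  proof -
    have "k / s > 0" using k s by simp
    then show ?thesis using xs s by linarith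
  qed
  ultimately have "sqrt (x\<^sup>2 + 2 * k) \<le> s - x"
  proof -
    assume a1: "x\<^sup>2 + 2 * k \<le> (s - x)\<^sup>2" and a2: "s - x \<ge> 0"
    have "sqrt (x\<^sup>2 + 2 * k) \<le> sqrt ((s - x)\<^sup>2)" using a1 by (rule real_sqrt_le_mono)
    also have "\<dots> = s - x" using a2 by simp
    finally show ?thesis .
  qed
  then show ?thesis by (simp add: d1_inv_def)
qed

lemma d1_inv_pos: "k > 0 \<Longrightarrow> d1_inv k x > 0"
proof -
  assume k: "k > 0"
  have "sqrt (x\<^sup>2) < sqrt (x\<^sup>2 + 2 * k)" using k by (intro real_sqrt_less_mono) simp
  then have "\<bar>x\<bar> < sqrt (x\<^sup>2 + 2 * k)" by (metis real_sqrt_abs)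
  then show ?thesis by (simp add: d1_inv_def)
qed

lemma d1_inv_prod: "k > 0 \<Longrightarrow> d1_inv k x * d1_inv k (-x) = 2 * k"
proof -
  assume k: "k > 0"
  have "(sqrt (x\<^sup>2 + 2 * k))\<^sup>2 = x\<^sup>2 + 2 * k" using k by simp
  then show ?thesis unfolding d1_inv_def by (simp add: power2_eq_square algebra_simps)
qed

lemma L2_le:
  assumes k: "k > 0" and c: "0 < c" "c < 1"
  shows "L2 k c \<le> impl_vol k c"
proof -
  obtain s where s: "s > 0" "C_BS k s = c" "impl_vol k c = s" using impl_vol[OF k c] by auto
  have "exp k * Phi (d2 k s) > 0" by (simp add: Phi_pos)
  then have "c < Phi (d1 k s)" using s(2) by (simp add: C_BS_def)
  then have "Phi_inv c \<le> d1 k s" using Phi_inv_less[OF c] by (simp add: less_imp_le)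
  then show ?thesis unfolding L2_def s(3) by (rule d1_inv_le[OF k s(1)])
qed

lemma L2_prod:
  assumes k: "k > 0" and c: "0 < c" "c < 1"
  shows "L2 k c * L2 k (1 - c) = 2 * k"
  unfolding L2_def using Phi_inv_sym[OF c] d1_inv_prod[OF k] by simp

lemma lower:
  assumes k: "k > 0" and c: "0 < c" "c < 1" and V: "impl_vol k (1 - c) \<le> V"
  shows "2 * k / V \<le> L2 k c"
proof -
  have c': "0 < 1 - c" "1 - c < 1" using c by auto
  have p: "L2 k (1 - c) > 0" unfolding L2_def by (rule d1_inv_pos[OF k])
  have "L2 k (1 - c) \<le> V" using L2_le[OF k c'] V by simp
  then have "2 * k / V \<le> 2 * k / L2 k (1 - c)"
    using p k by (intro divide_left_mono) auto
  also have "2 * k / L2 k (1 - c) = L2 k c" using L2_prod[OF k c] p by (simp add: field_simps)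
  finally show ?thesis .
qed

lemma h_bound:
  assumes k: "k \<ge> 0" and s: "s > 0"
  shows "Phi (k / s - s / 2) + exp k * Phi (- k / s - s / 2) \<le> (1 + exp k) * Phi (- s / 2)"
proof -
  define h where "h j = Phi (j / s - s / 2) + exp j * Phi (- j / s - s / 2) - (1 + exp j) * Phi (- s / 2)" for j
  have d: "(h has_real_derivative exp j * (Phi (- j / s - s / 2) - Phi (- s / 2))) (at j)" for j
  proof -
    have "(h has_real_derivative std_normal_density (j / s - s / 2) * (1 / s)
        + (exp j * Phi (- j / s - s / 2) + exp j * (std_normal_density (- j / s - s / 2) * (- 1 / s)))
        - exp j * Phi (- s / 2)) (at j)"
      unfolding h_def using s
      by (auto intro!: derivative_eq_intros DERIV_chain2[OF Phi_deriv] simp: field_simps)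
    moreover have "exp j * std_normal_density (- j / s - s / 2) = std_normal_density (j / s - s / 2)"
    proof -
      have "j + (- (- j / s - s / 2)\<^sup>2 / 2) = - (j / s - s / 2)\<^sup>2 / 2"
        using s by (simp add: power2_eq_square field_simps)
      then show ?thesis
        unfolding std_normal_density_def by (simp add: exp_add[symmetric] mult.left_commute)
    qed
    ultimately show ?thesis by (simp add: algebra_simps)
  qed
  have "h k \<le> h 0"
  proof (rule DERIV_nonpos_imp_decreasing_open[OF k])
    fix x :: real assume x: "0 < x" "x < k"
    have "- x / s - s / 2 \<le> - s / 2" using x s by simp
    then have "Phi (- x / s - s / 2) - Phi (- s / 2) \<le> 0" using Phi_mono by simp
    then show "\<exists>y. (h has_real_derivative y) (at x) \<and> y \<le> 0"
      using d[of x] by (intro exI[of _ "exp x * (Phi (- x / s - s / 2) - Phi (- s / 2))"])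
         (simp add: mult_nonneg_nonpos)
  next
    show "continuous_on {0..k} h"
      using d by (intro continuous_at_imp_continuous_on ballI) (meson DERIV_isCont)
  qed
  moreover have "h 0 = 0" by (simp add: h_def)
  ultimately show ?thesis by (simp add: h_def)
qed

lemma U1_ge:
  assumes k: "k > 0" and c: "0 < c" "c < 1"
  shows "impl_vol k c \<le> U1 k c"
proof -
  obtain s where s: "s > 0" "C_BS k s = c" "impl_vol k c = s" using impl_vol[OF k c] by auto
  have "1 - c = Phi (k / s - s / 2) + exp k * Phi (- k / s - s / 2)"
    using s(2) Phi_sym[of "d1 k s"] by (simp add: C_BS_def d1_def d2_def)
  also have "\<dots> \<le> (1 + exp k) * Phi (- s / 2)" using h_bound[of k s] k s by simp
  finally have "(1 - c) / (1 + exp k) \<le> Phi (- s / 2)"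
    by (simp add: divide_le_eq add_pos_pos mult.commute)
  moreover have "0 < (1 - c) / (1 + exp k)" using c by (simp add: add_pos_pos)
  moreover have "(1 - c) / (1 + exp k) < 1"
  proof -
    have "1 - c < 1 + exp k" using c exp_gt_zero[of k] by linarith
    moreover have "0 < 1 + exp k" using exp_gt_zero[of k] by linarith
    ultimately show ?thesis by (simp add: divide_less_eq_1_pos)
  qed
  ultimately have "Phi_inv ((1 - c) / (1 + exp k)) \<le> - s / 2" using Phi_inv_le by blast
  then show ?thesis unfolding U1_def s(3) by simp
qed

theorem mainTheorem10:
  fixes k :: real and U :: "real \<Rightarrow> real"
  assumes k: "k > 0"
    and Upos: "\<forall>c\<in>{0<..<1}. U c > 0"
    and Uge: "\<forall>c\<in>{0<..<1}. U c \<ge> impl_vol k c"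
  shows "(\<forall>c\<in>{0<..<1}. 2 * k / U (1 - c) \<le> L2 k c \<and> L2 k c \<le> impl_vol k c)
       \<and> (\<forall>c\<in>{0<..<1}. - k / Phi_inv (c / (1 + exp k)) \<le> L2 k c)"
proof (intro conjI ballI)
  fix c :: real assume c: "c \<in> {0<..<1}"
  then have c1: "0 < c" "c < 1" and c2: "1 - c \<in> {0<..<1}" by auto
  show "2 * k / U (1 - c) \<le> L2 k c" using lower[OF k c1] Uge c2 by blast
  show "L2 k c \<le> impl_vol k c" using L2_le[OF k c1] .
  have "2 * k / U1 k (1 - c) \<le> L2 k c" using lower[OF k c1 U1_ge[OF k]] c1 by simp
  moreover have "2 * k / U1 k (1 - c) = - k / Phi_inv (c / (1 + exp k))"
    unfolding U1_def by (simp add: divide_simps)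
  ultimately show "- k / Phi_inv (c / (1 + exp k)) \<le> L2 k c" by simp
qed

end
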